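(* Let $\alpha=(\alpha_n)_{n\in\mathbb{Z}}\in(k^\times)^{\mathbb{Z}}$, $\beta=(\beta_n)_{n\in\mathbb{Z}}\in k^{\mathbb{Z}}$ and $r\in\mathbb{Z}$. Then $(\phi_\alpha\theta_r)\,\phi^{(1)}_\beta\,(\phi_\alpha\theta_r)^{-1}=\phi^{(1)}_{\alpha^{-1}\beta[-r]}$. In particular, $\phi_\alpha\phi^{(1)}_\beta\phi_\alpha^{-1}=\phi^{(1)}_{\alpha^{-1}\beta}$.
   Context: Let $k$ be a field and $0\neq q\in k$ not a root of unity. $H=k_q[x,x^{-1},y]$ is the $k$-algebra generated by $x,x^{-1},y$ with $xx^{-1}=x^{-1}x=1$, $yx=qxy$; $\{x^ny^m:n\in\mathbb{Z},m\in\mathbb{N}\}$ is a $k$-basis. For sequences in $k^{\mathbb{Z}}$ operations are componentwise; $\alpha^{-1}=(\alpha_n^{-1})_n$ and $\beta[r]$ denotes the sequence with $\beta[r]_n=\beta_{n+r}$. $\theta_r$ is the linear map $x^ny^m\mapsto x^{n+r}y^m$; $\phi_\alpha$ is the linear map with $\phi_\alpha(x^n)=x^n$, $\phi_\alpha(x^ny^m)=(\prod_{i=0}^{m-1}\alpha_{n+i})x^ny^m$ for $m\ge1$. With $(j)_q=1+q+\dots+q^{j-1}$, $(m,0)_q=1$, $(m,j)_q=\prod_{i=0}^{j-1}(m-i)_q$, $\beta_{n,0}=1$, $\beta_{n,j}=\prod_{i=0}^{j-1}\beta_{n+i}$, let $\phi^{(1)}_\beta$ be the linear map $H\to H$ with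 $\phi^{(1)}_\beta(x^ny^m)=x^ny^m+\sum_{l=0}^{m-1}(m,m-l)_q\big(\beta_{n,m-l}x^{n+m-l}-\beta_{n,m-l-1}\beta_{n+m-1}x^{n+m-l-1}\big)y^l$. *)

theory Defs
  imports Main "HOL-Library.Poly_Mapping"
begin

text \<open>Elements of the quantum torus-like algebra H = k_q[x,x^-1,y], viewed as a k-vector
space with basis x^n y^m (n :: int, m :: nat): finitely supported coefficient functions.\<close>

type_synonym 'k qH = "(int \<times> nat) \<Rightarrow>\<^sub>0 'k"

definition hscale :: "'k::comm_ring_1 \<Rightarrow> 'k qH \<Rightarrow> 'k qH" where
  "hscale c p = Poly_Mapping.map (\<lambda>v. c * v) p"

definition lin_ext :: "(int \<Rightarrow> nat \<Rightarrow> 'k::comm_ring_1 qH) \<Rightarrow> 'k qH \<Rightarrow> 'k qH" where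
  "lin_ext g p = (\<Sum>nm\<in>Poly_Mapping.keys p. hscale (Poly_Mapping.lookup p nm) (g (fst nm) (snd nm)))"

definition xy :: "int \<Rightarrow> nat \<Rightarrow> 'k::comm_ring_1 qH" where
  "xy n m = Poly_Mapping.single (n, m) 1"

definition not_root_of_unity :: "'k::field \<Rightarrow> bool" where
  "not_root_of_unity q \<longleftrightarrow> (\<forall>n::nat. n > 0 \<longrightarrow> q ^ n \<noteq> 1)"

definition qint :: "'k::comm_ring_1 \<Rightarrow> nat \<Rightarrow> 'k" where
  "qint q j = (\<Sum>i<j. q ^ i)"

definition qfall :: "'k::comm_ring_1 \<Rightarrow> nat \<Rightarrow> nat \<Rightarrow> 'k" where
  "qfall q m j = (\<Prod>i<j. qint q (m - i))"

definition bprod :: "(int \<Rightarrow> 'k::comm_ring_1) \<Rightarrow> int \<Rightarrow> nat \<Rightarrow> 'k" where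
  "bprod \<beta> n j = (\<Prod>i<j. \<beta> (n + int i))"

definition theta :: "int \<Rightarrow> 'k::comm_ring_1 qH \<Rightarrow> 'k qH" where
  "theta r = lin_ext (\<lambda>n m. xy (n + r) m)"

definition phiA :: "(int \<Rightarrow> 'k::comm_ring_1) \<Rightarrow> 'k qH \<Rightarrow> 'k qH" where
  "phiA \<alpha> = lin_ext (\<lambda>n m. hscale (bprod \<alpha> n m) (xy n m))"

definition phi1 :: "'k::comm_ring_1 \<Rightarrow> (int \<Rightarrow> 'k) \<Rightarrow> 'k qH \<Rightarrow> 'k qH" where
  "phi1 q \<beta> = lin_ext (\<lambda>n m. xy n m +
      (\<Sum>l<m. hscale (qfall q m (m - l))
         (hscale (bprod \<beta> n (m - l)) (xy (n + int (m - l)) l)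
          - hscale (bprod \<beta> n (m - l - 1) * \<beta> (n + int m - 1)) (xy (n + int (m - l) - 1) l))))"

end

theory Submission imports Defs begin

lemma lookup_hscale[simp]: "Poly_Mapping.lookup (hscale c p) k = c * Poly_Mapping.lookup p k"
  unfolding hscale_def by transfer (auto simp: when_def)

lemma hscale_add_left: "hscale (a + b) p = hscale a p + hscale b p"
  by (rule poly_mapping_eqI) (simp add: lookup_add algebra_simps)
lemma hscale_add_right: "hscale c (p + q) = hscale c p + hscale c q"
  by (rule poly_mapping_eqI) (simp add: lookup_add algebra_simps)
lemma hscale_diff_right: "hscale c (p - q) = hscale c p - hscale c q"
  by (rule poly_mapping_eqI) (simp add: lookup_minus algebra_simps)
lemma hscale_0[simp]: "hscale 0 p = 0"
  by (rule poly_mapping_eqI) simp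
lemma hscale_zero[simp]: "hscale c 0 = 0"
  by (rule poly_mapping_eqI) simp
lemma hscale_1[simp]: "hscale 1 p = p"
  by (rule poly_mapping_eqI) simp
lemma hscale_hscale[simp]: "hscale a (hscale b p) = hscale (a * b) p"
  by (rule poly_mapping_eqI) (simp add: algebra_simps)
lemma hscale_sum_right: "hscale c (sum f A) = (\<Sum>x\<in>A. hscale c (f x))"
  by (induction A rule: infinite_finite_induct) (auto simp: hscale_add_right)

lemma lin_ext_superset:
  assumes "finite S" "Poly_Mapping.keys p \<subseteq> S"
  shows "lin_ext g p = (\<Sum>k\<in>S. hscale (Poly_Mapping.lookup p k) (g (fst k) (snd k)))"
  unfolding lin_ext_def
  by (rule sum.mono_neutral_left) (use assms in \<open>auto simp: in_keys_iff\<close>)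

lemma keys_add_sub: "Poly_Mapping.keys (p + q) \<subseteq> Poly_Mapping.keys p \<union> Poly_Mapping.keys q"
  by (auto simp: in_keys_iff lookup_add)
lemma keys_diff_sub: "Poly_Mapping.keys (p - q) \<subseteq> Poly_Mapping.keys p \<union> Poly_Mapping.keys q"
  by (auto simp: in_keys_iff lookup_minus)
lemma keys_hscale_sub: "Poly_Mapping.keys (hscale c p) \<subseteq> Poly_Mapping.keys p"
  by (auto simp: in_keys_iff)

lemma lin_ext_add: "lin_ext g (p + q) = lin_ext g p + lin_ext g q"
proof -
  let ?S = "Poly_Mapping.keys p \<union> Poly_Mapping.keys q"
  have "lin_ext g (p + q) = (\<Sum>k\<in>?S. hscale (Poly_Mapping.lookup (p+q) k) (g (fst k) (snd k)))"
    by (rule lin_ext_superset) (use keys_add_sub[of p q] in auto)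
  also have "\<dots> = (\<Sum>k\<in>?S. hscale (Poly_Mapping.lookup p k) (g (fst k) (snd k)))
     + (\<Sum>k\<in>?S. hscale (Poly_Mapping.lookup q k) (g (fst k) (snd k)))"
    by (simp add: lookup_add hscale_add_left sum.distrib)
  also have "\<dots> = lin_ext g p + lin_ext g q"
    by (subst (1 2) lin_ext_superset[of ?S]) auto
  finally show ?thesis .
qed

lemma lin_ext_diff: "lin_ext g (p - q) = lin_ext g p - lin_ext g q"
  using lin_ext_add[of g "p - q" q] by (simp add: eq_diff_eq)

lemma lin_ext_hscale: "lin_ext g (hscale c p) = hscale c (lin_ext g p)"
proof -
  have "lin_ext g (hscale c p) = (\<Sum>k\<in>Poly_Mapping.keys p. hscale (Poly_Mapping.lookup (hscale c p) k) (g (fst k) (snd k)))"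
    by (rule lin_ext_superset) (auto intro: keys_hscale_sub[THEN subsetD])
  also have "\<dots> = hscale c (lin_ext g p)"
    by (simp add: lin_ext_def hscale_sum_right)
  finally show ?thesis .
qed

lemma lin_ext_zero[simp]: "lin_ext g 0 = 0"
  by (simp add: lin_ext_def)

lemma lin_ext_sum: "lin_ext g (sum f A) = (\<Sum>x\<in>A. lin_ext g (f x))"
  by (induction A rule: infinite_finite_induct) (auto simp: lin_ext_add)

lemma lin_ext_xy[simp]: "lin_ext g (xy n m) = g n m"
proof -
  have "lin_ext g (xy n m) = (\<Sum>k\<in>{(n,m)}. hscale (Poly_Mapping.lookup (xy n m) k) (g (fst k) (snd k)))"
    by (rule lin_ext_superset) (auto simp: xy_def)
  then show ?thesis by (simp add: xy_def)
qed

lemma lin_ext_comp: "lin_ext g (lin_ext h p) = lin_ext (\<lambda>n m. lin_ext g (h n m)) p"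
proof -
  have "lin_ext g (lin_ext h p) = (\<Sum>k\<in>Poly_Mapping.keys p. lin_ext g (hscale (Poly_Mapping.lookup p k) (h (fst k) (snd k))))"
    by (subst (2) lin_ext_def) (simp add: lin_ext_sum)
  then show ?thesis by (simp add: lin_ext_hscale lin_ext_def[of "\<lambda>n m. lin_ext g (h n m)"])
qed

lemma lin_ext_id: "lin_ext xy p = p"
proof (rule poly_mapping_eqI)
  fix k
  have "Poly_Mapping.lookup (lin_ext xy p) k = (\<Sum>x\<in>Poly_Mapping.keys p. if x = k then Poly_Mapping.lookup p x else 0)"
    unfolding lin_ext_def lookup_sum xy_def by (rule sum.cong) (auto simp: lookup_single when_def)
  also have "\<dots> = Poly_Mapping.lookup p k"
    by (simp add: in_keys_iff)
  finally show "Poly_Mapping.lookup (lin_ext xy p) k = Poly_Mapping.lookup p k" .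
qed

lemma bprod_add: "bprod a n (j + l) = bprod a n j * bprod a (n + int j) l"
  by (induction l) (simp_all add: bprod_def algebra_simps)
lemma bprod_Suc: "bprod a n (Suc j) = bprod a n j * a (n + int j)"
  by (simp add: bprod_def)
lemma bprod_mult: "bprod (\<lambda>k. a k * b k) n j = bprod a n j * bprod b n j"
  by (simp add: bprod_def prod.distrib)
lemma bprod_inv: "bprod (\<lambda>k. inverse (a k :: 'k::field)) n j = inverse (bprod a n j)"
  by (induction j) (simp_all add: bprod_def)
lemma bprod_shift: "bprod (\<lambda>k. b (k - r)) n j = bprod b (n - r) j"
  by (simp add: bprod_def algebra_simps)
lemma bprod_nz: "\<forall>n. a n \<noteq> (0::'k::field) \<Longrightarrow> bprod a n j \<noteq> 0"
  by (simp add: bprod_def)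

lemma basis_calc:
  fixes \<alpha> \<beta> :: "int \<Rightarrow> 'k::field"
  assumes nz: "\<forall>n. \<alpha> n \<noteq> 0"
  shows "lin_ext (\<lambda>n m. hscale (bprod \<alpha> (n+r) m) (xy (n+r) m))
           (phi1 q \<beta> (hscale (inverse (bprod \<alpha> n m)) (xy (n-r) m)))
         = phi1 q (\<lambda>n. inverse (\<alpha> n) * \<beta> (n - r)) (xy n m)"
proof -
  have c1: "inverse (bprod \<alpha> n m) * bprod \<alpha> n m = 1"
    using bprod_nz[OF nz] by simp
  have c2: "inverse (bprod \<alpha> n m) *
              (qfall q m (m - l) * bprod \<beta> (n - r) (m - l)) *
              bprod \<alpha> (n + (int m - int l)) l
          = qfall q m (m - l) * bprod (\<lambda>n. inverse (\<alpha> n) * \<beta> (n - r)) n (m - l)"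
       "inverse (bprod \<alpha> n m) *
              (qfall q m (m - l) *
               (bprod \<beta> (n - r) (m - Suc l) * \<beta> (n - r + int m - 1))) *
              bprod \<alpha> (n + (int m + (- int l - 1))) l
          = qfall q m (m - l) *
              (bprod (\<lambda>n. inverse (\<alpha> n) * \<beta> (n - r)) n (m - Suc l) *
               (inverse (\<alpha> (n + int m - 1)) * \<beta> (n + int m - 1 - r)))"
       "xy (n + (int m + (- int l - 1))) l = xy (n + (int m - int l) - 1) l"
    if "l < m" for l
  proof -
    obtain j where j: "m = Suc j + l" using less_iff_Suc_add[of l m] \<open>l < m\<close> by auto
    have A: "bprod \<alpha> n m = bprod \<alpha> n (Suc j) * bprod \<alpha> (n + int (Suc j)) l"
      by (simp only: j bprod_add)
    have A2: "bprod \<alpha> n m = bprod \<alpha> n j * bprod \<alpha> (n + int j) l * \<alpha> (n + int m - 1)"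
    proof -
      have "bprod \<alpha> n m = bprod \<alpha> n (j + l) * \<alpha> (n + int (j + l))"
        by (simp add: j bprod_Suc)
      also have "\<dots> = bprod \<alpha> n j * bprod \<alpha> (n + int j) l * \<alpha> (n + int m - 1)"
        by (simp add: bprod_add j)
      finally show ?thesis .
    qed
    have nzs: "bprod \<alpha> n j \<noteq> 0" "bprod \<alpha> (n + int j) l \<noteq> 0" "\<alpha> (n + int m - 1) \<noteq> 0"
      "bprod \<alpha> n (Suc j) \<noteq> 0" "bprod \<alpha> (n + int (Suc j)) l \<noteq> 0"
      using bprod_nz[OF nz] nz by auto
    have ml: "m - l = Suc j" "m - Suc l = j" "int m - int l = int (Suc j)" "int m + (- int l - 1) = int j"
      using j by auto
    show "inverse (bprod \<alpha> n m) *
              (qfall q m (m - l) * bprod \<beta> (n - r) (m - l)) *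
              bprod \<alpha> (n + (int m - int l)) l
          = qfall q m (m - l) * bprod (\<lambda>n. inverse (\<alpha> n) * \<beta> (n - r)) n (m - l)"
      unfolding ml A bprod_mult bprod_inv bprod_shift using nzs by (simp add: divide_simps)
    show "inverse (bprod \<alpha> n m) *
              (qfall q m (m - l) *
               (bprod \<beta> (n - r) (m - Suc l) * \<beta> (n - r + int m - 1))) *
              bprod \<alpha> (n + (int m + (- int l - 1))) l
          = qfall q m (m - l) *
              (bprod (\<lambda>n. inverse (\<alpha> n) * \<beta> (n - r)) n (m - Suc l) *
               (inverse (\<alpha> (n + int m - 1)) * \<beta> (n + int m - 1 - r)))"
      unfolding ml A2 bprod_mult bprod_inv bprod_shift using nzs
      by (simp add: divide_simps algebra_simps)
    show "xy (n + (int m + (- int l - 1))) l = xy (n + (int m - int l) - 1) l"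
      by (simp add: algebra_simps)
  qed
  show ?thesis
    apply (simp add: phi1_def lin_ext_hscale lin_ext_add lin_ext_sum lin_ext_diff hscale_add_right hscale_sum_right hscale_diff_right c1)
    apply (rule sum.cong, simp)
    apply (simp add: c2)
    done
qed

lemma general:
  fixes q :: "'k::field" and \<alpha> \<beta> :: "int \<Rightarrow> 'k" and r :: int
  assumes nz: "\<forall>n. \<alpha> n \<noteq> 0"
  shows "(phiA \<alpha> \<circ> theta r) \<circ> phi1 q \<beta> \<circ> inv (phiA \<alpha> \<circ> theta r)
           = phi1 q (\<lambda>n. inverse (\<alpha> n) * \<beta> (n - r))"
proof -
  define gP where "gP = (\<lambda>n m. hscale (bprod \<alpha> (n+r) m) (xy (n+r) m) :: 'k qH)"
  define gS where "gS = (\<lambda>n m. hscale (inverse (bprod \<alpha> n m)) (xy (n-r) m) :: 'k qH)"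
  have P: "phiA \<alpha> \<circ> theta r = lin_ext gP"
    by (rule ext) (simp add: theta_def phiA_def lin_ext_comp gP_def)
  have PS: "lin_ext gP \<circ> lin_ext gS = id"
  proof (rule ext)
    fix p :: "'k qH"
    have "lin_ext gP (lin_ext gS p) = lin_ext xy p"
      unfolding lin_ext_comp
      by (rule arg_cong[where f="\<lambda>g. lin_ext g p"])
         (auto simp: gP_def gS_def lin_ext_hscale bprod_nz[OF nz] intro!: ext)
    then show "(lin_ext gP \<circ> lin_ext gS) p = id p" by (simp add: lin_ext_id)
  qed
  have SP: "lin_ext gS \<circ> lin_ext gP = id"
  proof (rule ext)
    fix p :: "'k qH"
    have "lin_ext gS (lin_ext gP p) = lin_ext xy p"
      unfolding lin_ext_comp
      by (rule arg_cong[where f="\<lambda>g. lin_ext g p"])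
         (auto simp: gP_def gS_def lin_ext_hscale bprod_nz[OF nz] intro!: ext)
    then show "(lin_ext gS \<circ> lin_ext gP) p = id p" by (simp add: lin_ext_id)
  qed
  have I: "inv (lin_ext gP) = lin_ext gS"
    using inv_unique_comp[OF PS SP] .
  obtain g where g: "phi1 q \<beta> = lin_ext g" by (simp add: phi1_def)
  obtain g' where g': "phi1 q (\<lambda>n. inverse (\<alpha> n) * \<beta> (n - r)) = lin_ext g'" by (simp add: phi1_def)
  show ?thesis
  proof (rule ext)
    fix p :: "'k qH"
    have "lin_ext gP (phi1 q \<beta> (lin_ext gS p)) = lin_ext (\<lambda>n m. lin_ext gP (phi1 q \<beta> (gS n m))) p"
      unfolding g lin_ext_comp ..
    also have "\<dots> = lin_ext (\<lambda>n m. phi1 q (\<lambda>n. inverse (\<alpha> n) * \<beta> (n - r)) (xy n m)) p"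
      unfolding gS_def gP_def basis_calc[OF nz] ..
    also have "\<dots> = phi1 q (\<lambda>n. inverse (\<alpha> n) * \<beta> (n - r)) (lin_ext xy p)"
      unfolding g' lin_ext_comp ..
    finally show "((phiA \<alpha> \<circ> theta r) \<circ> phi1 q \<beta> \<circ> inv (phiA \<alpha> \<circ> theta r)) p
        = phi1 q (\<lambda>n. inverse (\<alpha> n) * \<beta> (n - r)) p"
      by (simp add: P I lin_ext_id)
  qed
qed

theorem lemma3p15:
  fixes q :: "'k::field" and \<alpha> \<beta> :: "int \<Rightarrow> 'k" and r :: int
  assumes "q \<noteq> 0" and "not_root_of_unity q"
    and "\<forall>n. \<alpha> n \<noteq> 0"
  shows "(phiA \<alpha> \<circ> theta r) \<circ> phi1 q \<beta> \<circ> inv (phiA \<alpha> \<circ> theta r)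
           = phi1 q (\<lambda>n. inverse (\<alpha> n) * \<beta> (n - r))
         \<and> phiA \<alpha> \<circ> phi1 q \<beta> \<circ> inv (phiA \<alpha>) = phi1 q (\<lambda>n. inverse (\<alpha> n) * \<beta> n)"
proof
  show "(phiA \<alpha> \<circ> theta r) \<circ> phi1 q \<beta> \<circ> inv (phiA \<alpha> \<circ> theta r)
           = phi1 q (\<lambda>n. inverse (\<alpha> n) * \<beta> (n - r))"
    using general[OF assms(3)] .
  have T0: "phiA \<alpha> \<circ> theta 0 = phiA \<alpha>"
    by (rule ext) (simp add: theta_def lin_ext_id)
  show "phiA \<alpha> \<circ> phi1 q \<beta> \<circ> inv (phiA \<alpha>) = phi1 q (\<lambda>n. inverse (\<alpha> n) * \<beta> n)"
    using general[OF assms(3), where r=0 and q=q and \<beta>=\<beta>] unfolding T0 by simp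
qed

end
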